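(* Let $R$ be a commutative ring, let $n\ge 3$ be odd, $l\ge 1$, $m\ge 3$, and let $A\in R^{l\times n}$, $B\in R^{n\times m}$. Then: (i) if $m$ is odd, the product $AB$ can be computed using $n(lm+l+m-1)/2$ multiplications; (ii) if $m$ is even, the product $AB$ can be computed using $\big(n(lm+l+m-1)+l-1\big)/2$ multiplications.
   Context: "The product can be computed using $k$ multiplications" means: there are $k$ products, each a product of two linear forms with integer coefficients in the entries of $A$ and $B$ (the two factors may each involve entries of both $A$ and $B$; commutativity of $R$ may be used), such that every entry of $AB$ is an integer linear combination of these $k$ products, identically for all inputs $A,B$ over any commutative ring. Additions, subtractions and multiplications by integer constants are not counted. *)

theory Defs
  imports Main "HOL-Library.Poly_Mapping"
begin

text \<open>Indeterminates: a i j (entries of A, l x n) and b j p (entries of B, n x m).\<close>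
datatype var = VarA nat nat | VarB nat nat

text \<open>The universal commutative ring: integer polynomials in the indeterminates.\<close>
type_synonym zpoly = "(var \<Rightarrow>\<^sub>0 nat) \<Rightarrow>\<^sub>0 int"

definition X :: "var \<Rightarrow> zpoly" where
  "X v = Poly_Mapping.single (Poly_Mapping.single v 1) 1"

definition lin_form ::
  "nat \<Rightarrow> nat \<Rightarrow> nat \<Rightarrow> (nat \<Rightarrow> nat \<Rightarrow> int) \<Rightarrow> (nat \<Rightarrow> nat \<Rightarrow> int)
   \<Rightarrow> (nat \<Rightarrow> nat \<Rightarrow> 'a::comm_ring_1) \<Rightarrow> (nat \<Rightarrow> nat \<Rightarrow> 'a) \<Rightarrow> 'a" where
  "lin_form l n m \<alpha> \<beta> a b =
     (\<Sum>i<l. \<Sum>j<n. of_int (\<alpha> i j) * a i j) + (\<Sum>j<n. \<Sum>p<m. of_int (\<beta> j p) * b j p)"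

definition computes_with ::
  "nat \<Rightarrow> nat \<Rightarrow> nat \<Rightarrow> nat
   \<Rightarrow> (nat \<Rightarrow> nat \<Rightarrow> nat \<Rightarrow> int) \<Rightarrow> (nat \<Rightarrow> nat \<Rightarrow> nat \<Rightarrow> int)
   \<Rightarrow> (nat \<Rightarrow> nat \<Rightarrow> nat \<Rightarrow> int) \<Rightarrow> (nat \<Rightarrow> nat \<Rightarrow> nat \<Rightarrow> int)
   \<Rightarrow> (nat \<Rightarrow> nat \<Rightarrow> nat \<Rightarrow> int)
   \<Rightarrow> (nat \<Rightarrow> nat \<Rightarrow> 'a::comm_ring_1) \<Rightarrow> (nat \<Rightarrow> nat \<Rightarrow> 'a) \<Rightarrow> bool" where
  "computes_with l n m k \<alpha> \<beta> \<gamma> \<delta> c a b \<longleftrightarrow>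
     (\<forall>i<l. \<forall>p<m. (\<Sum>j<n. a i j * b j p) =
        (\<Sum>t<k. of_int (c i p t) *
            (lin_form l n m (\<alpha> t) (\<beta> t) a b * lin_form l n m (\<gamma> t) (\<delta> t) a b)))"

text \<open>The l x n by n x m product can be computed with k multiplications: the identity
  holds formally, i.e. in the polynomial ring over Z in the entries (equivalently,
  identically over every commutative ring).\<close>
definition mult_computable :: "nat \<Rightarrow> nat \<Rightarrow> nat \<Rightarrow> nat \<Rightarrow> bool" where
  "mult_computable l n m k \<longleftrightarrow>
     (\<exists>\<alpha> \<beta> \<gamma> \<delta> c. computes_with l n m k \<alpha> \<beta> \<gamma> \<delta> c
        (\<lambda>i j. X (VarA i j)) (\<lambda>j p. X (VarB j p)))"

end

theory Submission
  imports Defs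
begin


definition Rep :: "nat \<Rightarrow> nat \<Rightarrow> nat \<Rightarrow> (nat \<Rightarrow> nat \<Rightarrow> 'a::comm_ring_1) \<Rightarrow> (nat \<Rightarrow> nat \<Rightarrow> 'a) \<Rightarrow> nat \<Rightarrow> (nat \<Rightarrow> nat \<Rightarrow> 'a) \<Rightarrow> bool" where
 "Rep l n m a b k f \<longleftrightarrow> (\<exists>\<alpha> \<beta> \<gamma> \<delta> c. \<forall>i<l. \<forall>p<m. f i p =
     (\<Sum>t<k. of_int (c i p t) * (lin_form l n m (\<alpha> t) (\<beta> t) a b * lin_form l n m (\<gamma> t) (\<delta> t) a b)))"

definition is_lf :: "nat \<Rightarrow> nat \<Rightarrow> nat \<Rightarrow> (nat \<Rightarrow> nat \<Rightarrow> 'a::comm_ring_1) \<Rightarrow> (nat \<Rightarrow> nat \<Rightarrow> 'a) \<Rightarrow> 'a \<Rightarrow> bool" where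
 "is_lf l n m a b x \<longleftrightarrow> (\<exists>\<alpha> \<beta>. x = lin_form l n m \<alpha> \<beta> a b)"

lemma is_lf_add: "is_lf l n m a b x \<Longrightarrow> is_lf l n m a b y \<Longrightarrow> is_lf l n m a b (x + y)"
proof -
  assume "is_lf l n m a b x" "is_lf l n m a b y"
  then obtain \<alpha>1 \<beta>1 \<alpha>2 \<beta>2 where x: "x = lin_form l n m \<alpha>1 \<beta>1 a b" and y: "y = lin_form l n m \<alpha>2 \<beta>2 a b"
    unfolding is_lf_def by blast
  have "x + y = lin_form l n m (\<lambda>i j. \<alpha>1 i j + \<alpha>2 i j) (\<lambda>j p. \<beta>1 j p + \<beta>2 j p) a b"
    unfolding x y lin_form_def by (simp add: ring_distribs sum.distrib)
  then show ?thesis unfolding is_lf_def by blast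
qed

lemma is_lf_neg: "is_lf l n m a b x \<Longrightarrow> is_lf l n m a b (- x)"
proof -
  assume "is_lf l n m a b x"
  then obtain \<alpha>1 \<beta>1 where x: "x = lin_form l n m \<alpha>1 \<beta>1 a b"
    unfolding is_lf_def by blast
  have "- x = lin_form l n m (\<lambda>i j. - \<alpha>1 i j) (\<lambda>j p. - \<beta>1 j p) a b"
    unfolding x lin_form_def by (simp add: sum_negf)
  then show ?thesis unfolding is_lf_def by blast
qed

lemma is_lf_diff: "is_lf l n m a b x \<Longrightarrow> is_lf l n m a b y \<Longrightarrow> is_lf l n m a b (x - y)"
  using is_lf_add[of l n m a b x "-y"] is_lf_neg[of l n m a b y] by simp

lemma if10_mult: "of_int (if P then 1 else 0) * (x::'a::comm_ring_1) = (if P then x else 0)"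
  by simp

lemma sum_delta2: "i < (l::nat) \<Longrightarrow> j < (n::nat) \<Longrightarrow>
   (\<Sum>i'<l. \<Sum>j'<n. of_int (if i' = i \<and> j' = j then 1 else 0) * (f i' j' :: 'a::comm_ring_1)) = f i j"
proof -
  assume h: "i < l" "j < n"
  have "(\<Sum>i'<l. \<Sum>j'<n. of_int (if i' = i \<and> j' = j then 1 else 0) * f i' j') = (\<Sum>i'<l. if i' = i then f i j else 0)"
  proof (rule sum.cong[OF refl])
    fix i' assume "i' \<in> {..<l}"
    show "(\<Sum>j'<n. of_int (if i' = i \<and> j' = j then 1 else 0) * f i' j') = (if i' = i then f i j else 0)"
    proof (cases "i' = i")
      case True
      have "(\<Sum>j'<n. of_int (if i' = i \<and> j' = j then 1 else 0) * f i' j') = (\<Sum>j'<n. if j' = j then f i j' else 0)"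
        using True by (intro sum.cong refl) simp
      also have "\<dots> = f i j" using h by simp
      finally show ?thesis using True by simp
    qed simp
  qed
  also have "\<dots> = f i j" using h by simp
  finally show ?thesis .
qed

lemma is_lf_A: "i < l \<Longrightarrow> j < n \<Longrightarrow> is_lf l n m a b (a i j)"
proof -
  assume h: "i < l" "j < n"
  have "lin_form l n m (\<lambda>i' j'. if i' = i \<and> j' = j then 1 else 0) (\<lambda>_ _. 0) a b = a i j"
    unfolding lin_form_def using sum_delta2[OF h, of a] by simp
  then show ?thesis unfolding is_lf_def by metis
qed

lemma is_lf_B: "j < n \<Longrightarrow> p < m \<Longrightarrow> is_lf l n m a b (b j p)"
proof -
  assume h: "j < n" "p < m"
  have "lin_form l n m (\<lambda>_ _. 0) (\<lambda>j' p'. if j' = j \<and> p' = p then 1 else 0) a b = b j p"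
    unfolding lin_form_def using sum_delta2[OF h, of b] by simp
  then show ?thesis unfolding is_lf_def by metis
qed

lemma Rep_single:
  assumes "is_lf l n m a b x" "is_lf l n m a b y"
  shows "Rep l n m a b 1 (\<lambda>i p. of_int (w i p) * (x * y))"
proof -
  obtain \<alpha>1 \<beta>1 \<alpha>2 \<beta>2 where x: "x = lin_form l n m \<alpha>1 \<beta>1 a b" and y: "y = lin_form l n m \<alpha>2 \<beta>2 a b"
    using assms unfolding is_lf_def by blast
  show ?thesis unfolding Rep_def
    by (rule exI[of _ "\<lambda>_. \<alpha>1"], rule exI[of _ "\<lambda>_. \<beta>1"], rule exI[of _ "\<lambda>_. \<alpha>2"],
        rule exI[of _ "\<lambda>_. \<beta>2"], rule exI[of _ "\<lambda>i p _. w i p"]) (simp add: x y)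
qed

lemma Rep_zero: "Rep l n m a b 0 (\<lambda>i p. 0)"
  unfolding Rep_def by simp

lemma Rep_cong: "Rep l n m a b k f \<Longrightarrow> (\<And>i p. i < l \<Longrightarrow> p < m \<Longrightarrow> f i p = g i p) \<Longrightarrow> Rep l n m a b k g"
proof -
  assume r: "Rep l n m a b k f" and e: "\<And>i p. i < l \<Longrightarrow> p < m \<Longrightarrow> f i p = g i p"
  from r obtain \<alpha> \<beta> \<gamma> \<delta> c where h: "\<forall>i<l. \<forall>p<m. f i p =
     (\<Sum>t<k. of_int (c i p t) * (lin_form l n m (\<alpha> t) (\<beta> t) a b * lin_form l n m (\<gamma> t) (\<delta> t) a b))"
    unfolding Rep_def by blast
  have "\<forall>i<l. \<forall>p<m. g i p =
     (\<Sum>t<k. of_int (c i p t) * (lin_form l n m (\<alpha> t) (\<beta> t) a b * lin_form l n m (\<gamma> t) (\<delta> t) a b))"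
    using h e by auto
  then show ?thesis unfolding Rep_def by blast
qed

lemma sum_split_add: "(\<Sum>t<(k1::nat)+k2. F t) = (\<Sum>t<k1. F t) + (\<Sum>t<k2. F (k1 + t))"
  by (induct k2) (auto simp: add.assoc)

lemma Rep_add:
  assumes "Rep l n m a b k1 f" "Rep l n m a b k2 g"
  shows "Rep l n m a b (k1 + k2) (\<lambda>i p. f i p + g i p)"
proof -
  obtain \<alpha>1 \<beta>1 \<gamma>1 \<delta>1 c1 where h1: "\<forall>i<l. \<forall>p<m. f i p =
     (\<Sum>t<k1. of_int (c1 i p t) * (lin_form l n m (\<alpha>1 t) (\<beta>1 t) a b * lin_form l n m (\<gamma>1 t) (\<delta>1 t) a b))"
    using assms(1) unfolding Rep_def by blast
  obtain \<alpha>2 \<beta>2 \<gamma>2 \<delta>2 c2 where h2: "\<forall>i<l. \<forall>p<m. g i p =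
     (\<Sum>t<k2. of_int (c2 i p t) * (lin_form l n m (\<alpha>2 t) (\<beta>2 t) a b * lin_form l n m (\<gamma>2 t) (\<delta>2 t) a b))"
    using assms(2) unfolding Rep_def by blast
  define \<alpha> where "\<alpha> t = (if t < k1 then \<alpha>1 t else \<alpha>2 (t - k1))" for t
  define \<beta> where "\<beta> t = (if t < k1 then \<beta>1 t else \<beta>2 (t - k1))" for t
  define \<gamma> where "\<gamma> t = (if t < k1 then \<gamma>1 t else \<gamma>2 (t - k1))" for t
  define \<delta> where "\<delta> t = (if t < k1 then \<delta>1 t else \<delta>2 (t - k1))" for t
  define c where "c i p t = (if t < k1 then c1 i p t else c2 i p (t - k1))" for i p t
  let ?T = "\<lambda>i p t. of_int (c i p t) * (lin_form l n m (\<alpha> t) (\<beta> t) a b * lin_form l n m (\<gamma> t) (\<delta> t) a b)"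
  have "\<forall>i<l. \<forall>p<m. f i p + g i p = (\<Sum>t<k1+k2. ?T i p t)"
  proof (intro allI impI)
    fix i p assume ip: "i < l" "p < m"
    have "(\<Sum>t<k1+k2. ?T i p t) = (\<Sum>t<k1. ?T i p t) + (\<Sum>t<k2. ?T i p (k1 + t))"
      by (rule sum_split_add)
    also have "(\<Sum>t<k1. ?T i p t) = f i p"
      using h1 ip by (auto simp: \<alpha>_def \<beta>_def \<gamma>_def \<delta>_def c_def intro!: sum.cong)
    also have "(\<Sum>t<k2. ?T i p (k1 + t)) = g i p"
      using h2 ip by (auto simp: \<alpha>_def \<beta>_def \<gamma>_def \<delta>_def c_def intro!: sum.cong)
    finally show "f i p + g i p = (\<Sum>t<k1+k2. ?T i p t)" by simp
  qed
  then show ?thesis unfolding Rep_def by blast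
qed

lemma Rep_mono: "Rep l n m a b k f \<Longrightarrow> k \<le> k' \<Longrightarrow> Rep l n m a b k' f"
proof -
  assume r: "Rep l n m a b k f" and kk: "k \<le> k'"
  obtain d where d: "k' = k + d" using kk le_Suc_ex by blast
  have "Rep l n m a b d (\<lambda>i p. of_int 0 * (0 * 0))"
  proof -
    have z: "is_lf l n m a b 0" unfolding is_lf_def lin_form_def
      by (rule exI[of _ "\<lambda>_ _. 0"], rule exI[of _ "\<lambda>_ _. 0"]) simp
    have "Rep l n m a b d (\<lambda>i p. \<Sum>s<d. of_int 0 * (0 * 0))"
    proof (induct d)
      case 0 then show ?case using Rep_zero[of l n m a b] by simp
    next
      case (Suc d)
      from Rep_add[OF this Rep_single[OF z z, of "\<lambda>_ _. 0"]] show ?case by simp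
    qed
    then show ?thesis by simp
  qed
  from Rep_add[OF r this] show ?thesis using d by simp
qed

lemma Rep_sum:
  assumes "\<And>s. s < N \<Longrightarrow> Rep l n m a b k (f s)"
  shows "Rep l n m a b (N * k) (\<lambda>i p. \<Sum>s<N. f s i p)"
  using assms
proof (induct N)
  case 0 then show ?case using Rep_zero[of l n m a b] by simp
next
  case (Suc N)
  have "Rep l n m a b (N * k + k) (\<lambda>i p. (\<Sum>s<N. f s i p) + f N i p)"
    by (rule Rep_add) (use Suc in auto)
  then show ?case by (simp add: add.commute)
qed



lemma sum_delta_w: "i < (N::nat) \<Longrightarrow> (\<Sum>s<N. of_int (if s = i then w else 0) * (Y s :: 'a::comm_ring_1)) = of_int w * Y i"
proof -
  assume h: "i < N"
  have "(\<Sum>s<N. of_int (if s = i then w else 0) * Y s) = (\<Sum>s<N. if s = i then of_int w * Y s else 0)"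
    by (intro sum.cong refl) simp
  also have "\<dots> = of_int w * Y i" using h by simp
  finally show ?thesis .
qed

lemma row_family:
  assumes "\<And>i. i < l \<Longrightarrow> is_lf l n m a b (L i)" "\<And>i. i < l \<Longrightarrow> is_lf l n m a b (M i)"
  shows "Rep l n m a b l (\<lambda>i p. of_int (w p) * (L i * M i))"
proof -
  have "Rep l n m a b (l * 1) (\<lambda>i p. \<Sum>i0<l. of_int (if i0 = i then w p else 0) * (L i0 * M i0))"
    by (rule Rep_sum, rule Rep_single) (use assms in auto)
  then have "Rep l n m a b l (\<lambda>i p. \<Sum>i0<l. of_int (if i0 = i then w p else 0) * (L i0 * M i0))"
    by simp
  then show ?thesis
  proof (rule Rep_cong)
    fix i p assume il: "i < l" and "p < m"
    from il show "(\<Sum>i0<l. of_int (if i0 = i then w p else 0) * (L i0 * M i0)) = of_int (w p) * (L i * M i)"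
      by (rule sum_delta_w)
  qed
qed

lemma glob_single:
  assumes "is_lf l n m a b x" "is_lf l n m a b y"
  shows "Rep l n m a b 1 (\<lambda>i p. of_int (w p) * (x * y))"
  using Rep_single[OF assms, of "\<lambda>i p. w p"] by simp

lemma sum_odd_split: "(\<Sum>j<2*R+3. f j) = f 0 + f 1 + f 2 + (\<Sum>r<R. f (2*r+3) + f (2*r+4))"
  for f :: "nat \<Rightarrow> 'a::comm_ring_1"
proof (induct R)
  case 0 
  have "{..<(3::nat)} = {0,1,2}" by auto
  then show ?case by (simp add: add.assoc)
next
  case (Suc R)
  have e: "2 * Suc R + 3 = Suc (Suc (2*R+3))" by simp
  have "(\<Sum>j<2*Suc R+3. f j) = (\<Sum>j<2*R+3. f j) + f (2*R+3) + f (2*R+4)"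
    unfolding e sum.lessThan_Suc by (simp add: add.assoc add.commute)
  then show ?case using Suc by (simp add: algebra_simps)
qed


lemma shift_delta: "p < (m::nat) \<Longrightarrow> (\<Sum>s<m-1. of_int (if Suc s = p then w else 0) * (Y (Suc s) :: 'a::comm_ring_1))
   = (if p = 0 then 0 else of_int w * Y p)"
proof (cases p)
  case 0 then show ?thesis by simp
next
  case (Suc q)
  assume pm: "p < m"
  have "(\<Sum>s<m-1. of_int (if Suc s = p then w else 0) * Y (Suc s)) = (\<Sum>s<m-1. of_int (if s = q then w else 0) * Y (Suc s))"
    using Suc by (intro sum.cong refl) auto
  also have "\<dots> = of_int w * Y (Suc q)" by (rule sum_delta_w) (use Suc pm in linarith)
  finally show ?thesis using Suc by simp
qed

lemma pair_rep:
  assumes jn: "j < n" and kn: "k < n" and m1: "1 \<le> m"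
  shows "Rep l n m a b (l + l * m + (m - 1)) (\<lambda>i p. a i j * b j p + a i k * b k p)"
proof -
  have m0: "0 < m" using m1 by simp
  have R1: "Rep l n m a b l (\<lambda>i p. of_int (-1) * ((a i j - b k 0) * a i k))"
    by (rule row_family) (auto intro!: is_lf_diff is_lf_A is_lf_B simp: jn kn m0)
  have R2: "Rep l n m a b (l * (m * 1)) (\<lambda>i p. \<Sum>i0<l. \<Sum>p0<m.
      of_int (if i0 = i \<and> p0 = p then 1 else 0) * ((a i0 j + b k p0 - b k 0) * (a i0 k + b j p0)))"
    by (intro Rep_sum Rep_single) (auto intro!: is_lf_add is_lf_diff is_lf_A is_lf_B simp: jn kn m0)
  have R3: "Rep l n m a b ((m - 1) * 1) (\<lambda>i p. \<Sum>s<m-1.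
      of_int (if Suc s = p then -1 else 0) * ((b k (Suc s) - b k 0) * b j (Suc s)))"
    by (intro Rep_sum Rep_single) (auto intro!: is_lf_add is_lf_diff is_lf_A is_lf_B simp: jn kn m0)
  have R: "Rep l n m a b (l + l * (m * 1) + (m - 1) * 1) (\<lambda>i p. (of_int (-1) * ((a i j - b k 0) * a i k) +
      (\<Sum>i0<l. \<Sum>p0<m. of_int (if i0 = i \<and> p0 = p then 1 else 0) * ((a i0 j + b k p0 - b k 0) * (a i0 k + b j p0)))) +
      (\<Sum>s<m-1. of_int (if Suc s = p then -1 else 0) * ((b k (Suc s) - b k 0) * b j (Suc s))))"
    by (intro Rep_add R1 R2 R3)
  show ?thesis
  proof (rule Rep_cong[OF R[unfolded mult_1_right]])
    fix i p assume ip: "i < l" "p < m"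
    have s2: "(\<Sum>i0<l. \<Sum>p0<m. of_int (if i0 = i \<and> p0 = p then 1 else 0) * ((a i0 j + b k p0 - b k 0) * (a i0 k + b j p0)))
        = (a i j + b k p - b k 0) * (a i k + b j p)"
      by (rule sum_delta2[OF ip, of "\<lambda>i0 p0. (a i0 j + b k p0 - b k 0) * (a i0 k + b j p0)"])
    have s3: "(\<Sum>s<m-1. of_int (if Suc s = p then -1 else 0) * ((b k (Suc s) - b k 0) * b j (Suc s)))
        = - ((b k p - b k 0) * b j p)"
      using shift_delta[OF ip(2), of "-1" "\<lambda>s. (b k s - b k 0) * b j s"] by (cases "p = 0") simp_all
    show "of_int (-1) * ((a i j - b k 0) * a i k) +
      (\<Sum>i0<l. \<Sum>p0<m. of_int (if i0 = i \<and> p0 = p then 1 else 0) * ((a i0 j + b k p0 - b k 0) * (a i0 k + b j p0))) +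
      (\<Sum>s<m-1. of_int (if Suc s = p then -1 else 0) * ((b k (Suc s) - b k 0) * b j (Suc s)))
      = a i j * b j p + a i k * b k p"
      unfolding s2 s3 by (simp add: algebra_simps)
  qed
qed




definition pfirst :: "nat \<Rightarrow> nat \<Rightarrow> bool" where "pfirst S p \<longleftrightarrow> 3 \<le> p \<and> p < 2*S+3 \<and> odd p"
definition psecond :: "nat \<Rightarrow> nat \<Rightarrow> bool" where "psecond S p \<longleftrightarrow> 4 \<le> p \<and> p < 2*S+4 \<and> even p"
definition wE01 :: "bool \<Rightarrow> nat \<Rightarrow> nat \<Rightarrow> int" where
  "wE01 e S p = (if p = 0 \<or> p = 1 \<or> pfirst S p \<or> (e \<and> p = 2*S+3) then -1 else 0)"
definition wE02 :: "nat \<Rightarrow> nat \<Rightarrow> int" where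
  "wE02 S p = (if p = 0 \<or> p = 2 \<or> psecond S p then -1 else 0)"
definition wE12 :: "nat \<Rightarrow> nat \<Rightarrow> int" where
  "wE12 S p = (if p = 1 \<or> p = 2 \<or> pfirst S p then -1 else if psecond S p then 1 else 0)"

definition coreT :: "(nat \<Rightarrow> nat \<Rightarrow> 'a::comm_ring_1) \<Rightarrow> (nat \<Rightarrow> nat \<Rightarrow> 'a) \<Rightarrow> bool \<Rightarrow> nat \<Rightarrow> nat \<Rightarrow> nat \<Rightarrow> 'a" where
  "coreT a b e S i p = of_int (wE01 e S p) * ((a i 0 - b 1 0) * (a i 1 - b 0 1)) + of_int (wE02 S p) * ((a i 0 - b 2 0) * (a i 2 - b 0 2)) + of_int (wE12 S p) * ((a i 1 - b 2 1) * (a i 2 - b 1 2)) + of_int ((if p = 0 then 1 else 0)) * ((a i 0) * (a i 1 + a i 2 + b 0 0 - b 0 1 - b 0 2)) + of_int ((if p = 1 then 1 else 0)) * ((a i 1) * (a i 0 + a i 2 + b 1 1 - b 1 0 - b 1 2)) + of_int ((if p = 2 then 1 else 0)) * ((a i 2) * (a i 0 + a i 1 + b 2 2 - b 2 0 - b 2 1)) + of_int (- wE01 e S p) * ((b 1 0) * (b 0 1)) + of_int (- wE02 S p) * ((b 2 0) * (b 0 2)) + of_int (- wE12 S p) * ((b 2 1) * (b 1 2))"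

definition pairT :: "(nat \<Rightarrow> nat \<Rightarrow> 'a::comm_ring_1) \<Rightarrow> (nat \<Rightarrow> nat \<Rightarrow> 'a) \<Rightarrow> nat \<Rightarrow> nat \<Rightarrow> nat \<Rightarrow> 'a" where
  "pairT a b s i p = of_int ((if p = 2*s+3 then 1 else 0)) * ((a i 0 - b 1 0 + b 1 (2*s+3) + b 1 (2*s+4)) * (a i 1 - b 0 1 + b 0 (2*s+3))) + of_int ((if p = 2*s+4 then 1 else 0)) * ((a i 0 - b 2 0 + b 2 (2*s+3) + b 2 (2*s+4)) * (a i 2 - b 0 2 + b 0 (2*s+4))) + of_int ((if p = 2*s+3 then 1 else if p = 2*s+4 then -1 else 0)) * ((a i 1 - b 2 1 + b 2 (2*s+3)) * (a i 2 - b 1 2 - b 1 (2*s+4))) + of_int ((if p = 2*s+3 then -1 else 0)) * ((b 1 (2*s+3) + b 1 (2*s+4) - b 1 0) * (b 0 (2*s+3) - b 0 1)) + of_int ((if p = 2*s+4 then -1 else 0)) * ((b 2 (2*s+3) + b 2 (2*s+4) - b 2 0) * (b 0 (2*s+4) - b 0 2)) + of_int ((if p = 2*s+3 then -1 else if p = 2*s+4 then 1 else 0)) * ((b 2 (2*s+3) - b 2 1) * (- b 1 (2*s+4) - b 1 2))"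

definition lastT :: "(nat \<Rightarrow> nat \<Rightarrow> 'a::comm_ring_1) \<Rightarrow> (nat \<Rightarrow> nat \<Rightarrow> 'a) \<Rightarrow> nat \<Rightarrow> nat \<Rightarrow> nat \<Rightarrow> 'a" where
  "lastT a b S i p = of_int ((if p = 2*S+3 then 1 else 0)) * ((a i 0 - b 1 0 + b 1 (2*S+3)) * (a i 1 - b 0 1 + b 0 (2*S+3))) + of_int ((if p = 2*S+3 then 1 else 0)) * ((a i 2) * (b 2 (2*S+3))) + of_int ((if p = 2*S+3 then -1 else 0)) * ((b 1 (2*S+3) - b 1 0) * (b 0 (2*S+3) - b 0 1))"

lemma coreT_rep:
  assumes "3 \<le> n" "3 \<le> m"
  shows "Rep l n m a b (l + l + l + l + l + l + 1 + 1 + 1) (\<lambda>i p. coreT a b e S i p)"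
proof -
  have E01: "Rep l n m a b l (\<lambda>i p. of_int (wE01 e S p) * ((a i 0 - b 1 0) * (a i 1 - b 0 1)))"
    by (rule row_family) (use assms in \<open>auto intro!: is_lf_add is_lf_diff is_lf_neg is_lf_A is_lf_B\<close>)
  have E02: "Rep l n m a b l (\<lambda>i p. of_int (wE02 S p) * ((a i 0 - b 2 0) * (a i 2 - b 0 2)))"
    by (rule row_family) (use assms in \<open>auto intro!: is_lf_add is_lf_diff is_lf_neg is_lf_A is_lf_B\<close>)
  have E12: "Rep l n m a b l (\<lambda>i p. of_int (wE12 S p) * ((a i 1 - b 2 1) * (a i 2 - b 1 2)))"
    by (rule row_family) (use assms in \<open>auto intro!: is_lf_add is_lf_diff is_lf_neg is_lf_A is_lf_B\<close>)
  have S0: "Rep l n m a b l (\<lambda>i p. of_int ((if p = 0 then 1 else 0)) * ((a i 0) * (a i 1 + a i 2 + b 0 0 - b 0 1 - b 0 2)))"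
    by (rule row_family) (use assms in \<open>auto intro!: is_lf_add is_lf_diff is_lf_neg is_lf_A is_lf_B\<close>)
  have S1: "Rep l n m a b l (\<lambda>i p. of_int ((if p = 1 then 1 else 0)) * ((a i 1) * (a i 0 + a i 2 + b 1 1 - b 1 0 - b 1 2)))"
    by (rule row_family) (use assms in \<open>auto intro!: is_lf_add is_lf_diff is_lf_neg is_lf_A is_lf_B\<close>)
  have S2: "Rep l n m a b l (\<lambda>i p. of_int ((if p = 2 then 1 else 0)) * ((a i 2) * (a i 0 + a i 1 + b 2 2 - b 2 0 - b 2 1)))"
    by (rule row_family) (use assms in \<open>auto intro!: is_lf_add is_lf_diff is_lf_neg is_lf_A is_lf_B\<close>)
  have G01: "Rep l n m a b 1 (\<lambda>i p. of_int (- wE01 e S p) * ((b 1 0) * (b 0 1)))"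
    by (rule glob_single) (use assms in \<open>auto intro!: is_lf_add is_lf_diff is_lf_neg is_lf_A is_lf_B\<close>)
  have G02: "Rep l n m a b 1 (\<lambda>i p. of_int (- wE02 S p) * ((b 2 0) * (b 0 2)))"
    by (rule glob_single) (use assms in \<open>auto intro!: is_lf_add is_lf_diff is_lf_neg is_lf_A is_lf_B\<close>)
  have G12: "Rep l n m a b 1 (\<lambda>i p. of_int (- wE12 S p) * ((b 2 1) * (b 1 2)))"
    by (rule glob_single) (use assms in \<open>auto intro!: is_lf_add is_lf_diff is_lf_neg is_lf_A is_lf_B\<close>)
  have X1: "Rep l n m a b (l + l) (\<lambda>i p. of_int (wE01 e S p) * ((a i 0 - b 1 0) * (a i 1 - b 0 1)) + of_int (wE02 S p) * ((a i 0 - b 2 0) * (a i 2 - b 0 2)))"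
    by (rule Rep_add[OF E01 E02])
  have X2: "Rep l n m a b (l + l + l) (\<lambda>i p. of_int (wE01 e S p) * ((a i 0 - b 1 0) * (a i 1 - b 0 1)) + of_int (wE02 S p) * ((a i 0 - b 2 0) * (a i 2 - b 0 2)) + of_int (wE12 S p) * ((a i 1 - b 2 1) * (a i 2 - b 1 2)))"
    by (rule Rep_add[OF X1 E12])
  have X3: "Rep l n m a b (l + l + l + l) (\<lambda>i p. of_int (wE01 e S p) * ((a i 0 - b 1 0) * (a i 1 - b 0 1)) + of_int (wE02 S p) * ((a i 0 - b 2 0) * (a i 2 - b 0 2)) + of_int (wE12 S p) * ((a i 1 - b 2 1) * (a i 2 - b 1 2)) + of_int ((if p = 0 then 1 else 0)) * ((a i 0) * (a i 1 + a i 2 + b 0 0 - b 0 1 - b 0 2)))"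
    by (rule Rep_add[OF X2 S0])
  have X4: "Rep l n m a b (l + l + l + l + l) (\<lambda>i p. of_int (wE01 e S p) * ((a i 0 - b 1 0) * (a i 1 - b 0 1)) + of_int (wE02 S p) * ((a i 0 - b 2 0) * (a i 2 - b 0 2)) + of_int (wE12 S p) * ((a i 1 - b 2 1) * (a i 2 - b 1 2)) + of_int ((if p = 0 then 1 else 0)) * ((a i 0) * (a i 1 + a i 2 + b 0 0 - b 0 1 - b 0 2)) + of_int ((if p = 1 then 1 else 0)) * ((a i 1) * (a i 0 + a i 2 + b 1 1 - b 1 0 - b 1 2)))"
    by (rule Rep_add[OF X3 S1])
  have X5: "Rep l n m a b (l + l + l + l + l + l) (\<lambda>i p. of_int (wE01 e S p) * ((a i 0 - b 1 0) * (a i 1 - b 0 1)) + of_int (wE02 S p) * ((a i 0 - b 2 0) * (a i 2 - b 0 2)) + of_int (wE12 S p) * ((a i 1 - b 2 1) * (a i 2 - b 1 2)) + of_int ((if p = 0 then 1 else 0)) * ((a i 0) * (a i 1 + a i 2 + b 0 0 - b 0 1 - b 0 2)) + of_int ((if p = 1 then 1 else 0)) * ((a i 1) * (a i 0 + a i 2 + b 1 1 - b 1 0 - b 1 2)) + of_int ((if p = 2 then 1 else 0)) * ((a i 2) * (a i 0 + a i 1 + b 2 2 - b 2 0 - b 2 1)))"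
    by (rule Rep_add[OF X4 S2])
  have X6: "Rep l n m a b (l + l + l + l + l + l + 1) (\<lambda>i p. of_int (wE01 e S p) * ((a i 0 - b 1 0) * (a i 1 - b 0 1)) + of_int (wE02 S p) * ((a i 0 - b 2 0) * (a i 2 - b 0 2)) + of_int (wE12 S p) * ((a i 1 - b 2 1) * (a i 2 - b 1 2)) + of_int ((if p = 0 then 1 else 0)) * ((a i 0) * (a i 1 + a i 2 + b 0 0 - b 0 1 - b 0 2)) + of_int ((if p = 1 then 1 else 0)) * ((a i 1) * (a i 0 + a i 2 + b 1 1 - b 1 0 - b 1 2)) + of_int ((if p = 2 then 1 else 0)) * ((a i 2) * (a i 0 + a i 1 + b 2 2 - b 2 0 - b 2 1)) + of_int (- wE01 e S p) * ((b 1 0) * (b 0 1)))"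
    by (rule Rep_add[OF X5 G01])
  have X7: "Rep l n m a b (l + l + l + l + l + l + 1 + 1) (\<lambda>i p. of_int (wE01 e S p) * ((a i 0 - b 1 0) * (a i 1 - b 0 1)) + of_int (wE02 S p) * ((a i 0 - b 2 0) * (a i 2 - b 0 2)) + of_int (wE12 S p) * ((a i 1 - b 2 1) * (a i 2 - b 1 2)) + of_int ((if p = 0 then 1 else 0)) * ((a i 0) * (a i 1 + a i 2 + b 0 0 - b 0 1 - b 0 2)) + of_int ((if p = 1 then 1 else 0)) * ((a i 1) * (a i 0 + a i 2 + b 1 1 - b 1 0 - b 1 2)) + of_int ((if p = 2 then 1 else 0)) * ((a i 2) * (a i 0 + a i 1 + b 2 2 - b 2 0 - b 2 1)) + of_int (- wE01 e S p) * ((b 1 0) * (b 0 1)) + of_int (- wE02 S p) * ((b 2 0) * (b 0 2)))"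
    by (rule Rep_add[OF X6 G02])
  have X8: "Rep l n m a b (l + l + l + l + l + l + 1 + 1 + 1) (\<lambda>i p. of_int (wE01 e S p) * ((a i 0 - b 1 0) * (a i 1 - b 0 1)) + of_int (wE02 S p) * ((a i 0 - b 2 0) * (a i 2 - b 0 2)) + of_int (wE12 S p) * ((a i 1 - b 2 1) * (a i 2 - b 1 2)) + of_int ((if p = 0 then 1 else 0)) * ((a i 0) * (a i 1 + a i 2 + b 0 0 - b 0 1 - b 0 2)) + of_int ((if p = 1 then 1 else 0)) * ((a i 1) * (a i 0 + a i 2 + b 1 1 - b 1 0 - b 1 2)) + of_int ((if p = 2 then 1 else 0)) * ((a i 2) * (a i 0 + a i 1 + b 2 2 - b 2 0 - b 2 1)) + of_int (- wE01 e S p) * ((b 1 0) * (b 0 1)) + of_int (- wE02 S p) * ((b 2 0) * (b 0 2)) + of_int (- wE12 S p) * ((b 2 1) * (b 1 2)))"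
    by (rule Rep_add[OF X7 G12])
  then show ?thesis unfolding coreT_def .
qed

lemma pairT_rep:
  assumes "3 \<le> n" "2*s+4 < m"
  shows "Rep l n m a b (l + l + l + 1 + 1 + 1) (\<lambda>i p. pairT a b s i p)"
proof -
  have F: "Rep l n m a b l (\<lambda>i p. of_int ((if p = 2*s+3 then 1 else 0)) * ((a i 0 - b 1 0 + b 1 (2*s+3) + b 1 (2*s+4)) * (a i 1 - b 0 1 + b 0 (2*s+3))))"
    by (rule row_family) (use assms in \<open>auto intro!: is_lf_add is_lf_diff is_lf_neg is_lf_A is_lf_B\<close>)
  have H: "Rep l n m a b l (\<lambda>i p. of_int ((if p = 2*s+4 then 1 else 0)) * ((a i 0 - b 2 0 + b 2 (2*s+3) + b 2 (2*s+4)) * (a i 2 - b 0 2 + b 0 (2*s+4))))"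
    by (rule row_family) (use assms in \<open>auto intro!: is_lf_add is_lf_diff is_lf_neg is_lf_A is_lf_B\<close>)
  have G: "Rep l n m a b l (\<lambda>i p. of_int ((if p = 2*s+3 then 1 else if p = 2*s+4 then -1 else 0)) * ((a i 1 - b 2 1 + b 2 (2*s+3)) * (a i 2 - b 1 2 - b 1 (2*s+4))))"
    by (rule row_family) (use assms in \<open>auto intro!: is_lf_add is_lf_diff is_lf_neg is_lf_A is_lf_B\<close>)
  have RF: "Rep l n m a b 1 (\<lambda>i p. of_int ((if p = 2*s+3 then -1 else 0)) * ((b 1 (2*s+3) + b 1 (2*s+4) - b 1 0) * (b 0 (2*s+3) - b 0 1)))"
    by (rule glob_single) (use assms in \<open>auto intro!: is_lf_add is_lf_diff is_lf_neg is_lf_A is_lf_B\<close>)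
  have RH: "Rep l n m a b 1 (\<lambda>i p. of_int ((if p = 2*s+4 then -1 else 0)) * ((b 2 (2*s+3) + b 2 (2*s+4) - b 2 0) * (b 0 (2*s+4) - b 0 2)))"
    by (rule glob_single) (use assms in \<open>auto intro!: is_lf_add is_lf_diff is_lf_neg is_lf_A is_lf_B\<close>)
  have RG: "Rep l n m a b 1 (\<lambda>i p. of_int ((if p = 2*s+3 then -1 else if p = 2*s+4 then 1 else 0)) * ((b 2 (2*s+3) - b 2 1) * (- b 1 (2*s+4) - b 1 2)))"
    by (rule glob_single) (use assms in \<open>auto intro!: is_lf_add is_lf_diff is_lf_neg is_lf_A is_lf_B\<close>)
  have X1: "Rep l n m a b (l + l) (\<lambda>i p. of_int ((if p = 2*s+3 then 1 else 0)) * ((a i 0 - b 1 0 + b 1 (2*s+3) + b 1 (2*s+4)) * (a i 1 - b 0 1 + b 0 (2*s+3))) + of_int ((if p = 2*s+4 then 1 else 0)) * ((a i 0 - b 2 0 + b 2 (2*s+3) + b 2 (2*s+4)) * (a i 2 - b 0 2 + b 0 (2*s+4))))"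
    by (rule Rep_add[OF F H])
  have X2: "Rep l n m a b (l + l + l) (\<lambda>i p. of_int ((if p = 2*s+3 then 1 else 0)) * ((a i 0 - b 1 0 + b 1 (2*s+3) + b 1 (2*s+4)) * (a i 1 - b 0 1 + b 0 (2*s+3))) + of_int ((if p = 2*s+4 then 1 else 0)) * ((a i 0 - b 2 0 + b 2 (2*s+3) + b 2 (2*s+4)) * (a i 2 - b 0 2 + b 0 (2*s+4))) + of_int ((if p = 2*s+3 then 1 else if p = 2*s+4 then -1 else 0)) * ((a i 1 - b 2 1 + b 2 (2*s+3)) * (a i 2 - b 1 2 - b 1 (2*s+4))))"
    by (rule Rep_add[OF X1 G])
  have X3: "Rep l n m a b (l + l + l + 1) (\<lambda>i p. of_int ((if p = 2*s+3 then 1 else 0)) * ((a i 0 - b 1 0 + b 1 (2*s+3) + b 1 (2*s+4)) * (a i 1 - b 0 1 + b 0 (2*s+3))) + of_int ((if p = 2*s+4 then 1 else 0)) * ((a i 0 - b 2 0 + b 2 (2*s+3) + b 2 (2*s+4)) * (a i 2 - b 0 2 + b 0 (2*s+4))) + of_int ((if p = 2*s+3 then 1 else if p = 2*s+4 then -1 else 0)) * ((a i 1 - b 2 1 + b 2 (2*s+3)) * (a i 2 - b 1 2 - b 1 (2*s+4))) + of_int ((if p = 2*s+3 then -1 else 0)) * ((b 1 (2*s+3) + b 1 (2*s+4) - b 1 0) * (b 0 (2*s+3) - b 0 1)))"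
    by (rule Rep_add[OF X2 RF])
  have X4: "Rep l n m a b (l + l + l + 1 + 1) (\<lambda>i p. of_int ((if p = 2*s+3 then 1 else 0)) * ((a i 0 - b 1 0 + b 1 (2*s+3) + b 1 (2*s+4)) * (a i 1 - b 0 1 + b 0 (2*s+3))) + of_int ((if p = 2*s+4 then 1 else 0)) * ((a i 0 - b 2 0 + b 2 (2*s+3) + b 2 (2*s+4)) * (a i 2 - b 0 2 + b 0 (2*s+4))) + of_int ((if p = 2*s+3 then 1 else if p = 2*s+4 then -1 else 0)) * ((a i 1 - b 2 1 + b 2 (2*s+3)) * (a i 2 - b 1 2 - b 1 (2*s+4))) + of_int ((if p = 2*s+3 then -1 else 0)) * ((b 1 (2*s+3) + b 1 (2*s+4) - b 1 0) * (b 0 (2*s+3) - b 0 1)) + of_int ((if p = 2*s+4 then -1 else 0)) * ((b 2 (2*s+3) + b 2 (2*s+4) - b 2 0) * (b 0 (2*s+4) - b 0 2)))"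
    by (rule Rep_add[OF X3 RH])
  have X5: "Rep l n m a b (l + l + l + 1 + 1 + 1) (\<lambda>i p. of_int ((if p = 2*s+3 then 1 else 0)) * ((a i 0 - b 1 0 + b 1 (2*s+3) + b 1 (2*s+4)) * (a i 1 - b 0 1 + b 0 (2*s+3))) + of_int ((if p = 2*s+4 then 1 else 0)) * ((a i 0 - b 2 0 + b 2 (2*s+3) + b 2 (2*s+4)) * (a i 2 - b 0 2 + b 0 (2*s+4))) + of_int ((if p = 2*s+3 then 1 else if p = 2*s+4 then -1 else 0)) * ((a i 1 - b 2 1 + b 2 (2*s+3)) * (a i 2 - b 1 2 - b 1 (2*s+4))) + of_int ((if p = 2*s+3 then -1 else 0)) * ((b 1 (2*s+3) + b 1 (2*s+4) - b 1 0) * (b 0 (2*s+3) - b 0 1)) + of_int ((if p = 2*s+4 then -1 else 0)) * ((b 2 (2*s+3) + b 2 (2*s+4) - b 2 0) * (b 0 (2*s+4) - b 0 2)) + of_int ((if p = 2*s+3 then -1 else if p = 2*s+4 then 1 else 0)) * ((b 2 (2*s+3) - b 2 1) * (- b 1 (2*s+4) - b 1 2)))"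
    by (rule Rep_add[OF X4 RG])
  then show ?thesis unfolding pairT_def .
qed

lemma lastT_rep:
  assumes "3 \<le> n" "2*S+3 < m"
  shows "Rep l n m a b (l + l + 1) (\<lambda>i p. lastT a b S i p)"
proof -
  have K: "Rep l n m a b l (\<lambda>i p. of_int ((if p = 2*S+3 then 1 else 0)) * ((a i 0 - b 1 0 + b 1 (2*S+3)) * (a i 1 - b 0 1 + b 0 (2*S+3))))"
    by (rule row_family) (use assms in \<open>auto intro!: is_lf_add is_lf_diff is_lf_neg is_lf_A is_lf_B\<close>)
  have L: "Rep l n m a b l (\<lambda>i p. of_int ((if p = 2*S+3 then 1 else 0)) * ((a i 2) * (b 2 (2*S+3))))"
    by (rule row_family) (use assms in \<open>auto intro!: is_lf_add is_lf_diff is_lf_neg is_lf_A is_lf_B\<close>)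
  have RK: "Rep l n m a b 1 (\<lambda>i p. of_int ((if p = 2*S+3 then -1 else 0)) * ((b 1 (2*S+3) - b 1 0) * (b 0 (2*S+3) - b 0 1)))"
    by (rule glob_single) (use assms in \<open>auto intro!: is_lf_add is_lf_diff is_lf_neg is_lf_A is_lf_B\<close>)
  have X1: "Rep l n m a b (l + l) (\<lambda>i p. of_int ((if p = 2*S+3 then 1 else 0)) * ((a i 0 - b 1 0 + b 1 (2*S+3)) * (a i 1 - b 0 1 + b 0 (2*S+3))) + of_int ((if p = 2*S+3 then 1 else 0)) * ((a i 2) * (b 2 (2*S+3))))"
    by (rule Rep_add[OF K L])
  have X2: "Rep l n m a b (l + l + 1) (\<lambda>i p. of_int ((if p = 2*S+3 then 1 else 0)) * ((a i 0 - b 1 0 + b 1 (2*S+3)) * (a i 1 - b 0 1 + b 0 (2*S+3))) + of_int ((if p = 2*S+3 then 1 else 0)) * ((a i 2) * (b 2 (2*S+3))) + of_int ((if p = 2*S+3 then -1 else 0)) * ((b 1 (2*S+3) - b 1 0) * (b 0 (2*S+3) - b 0 1)))"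
    by (rule Rep_add[OF X1 RK])
  then show ?thesis unfolding lastT_def .
qed


lemma sum_single: "s0 < (S::nat) \<Longrightarrow> (\<And>s. s < S \<Longrightarrow> s \<noteq> s0 \<Longrightarrow> g s = 0) \<Longrightarrow> (\<Sum>s<S. g s) = (g s0 :: 'a::comm_ring_1)"
proof -
  assume h: "s0 < S" "\<And>s. s < S \<Longrightarrow> s \<noteq> s0 \<Longrightarrow> g s = 0"
  have "(\<Sum>s<S. g s) = (\<Sum>s<S. if s = s0 then g s else 0)"
    using h(2) by (intro sum.cong refl) auto
  also have "\<dots> = g s0" using h(1) by simp
  finally show ?thesis .
qed

lemma core_point:
  fixes a b :: "nat \<Rightarrow> nat \<Rightarrow> 'a::comm_ring_1"
  assumes pm: "p < 2*S+3 + (if e then 1 else 0)"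
  shows "coreT a b e S i p + (\<Sum>s<S. pairT a b s i p) + (if e then lastT a b S i p else 0)
       = a i 0 * b 0 p + a i 1 * b 1 p + a i 2 * b 2 p"
proof -
  have "p = 0 \<or> p = 1 \<or> p = 2 \<or> (\<exists>s0<S. p = 2*s0+3) \<or> (\<exists>s0<S. p = 2*s0+4) \<or> (e \<and> p = 2*S+3)"
    using pm by (cases e) (simp_all, presburger+)
  moreover
  { assume p: "p = 0"
    have z: "(\<Sum>s<S. pairT a b s i p) = 0" by (rule sum.neutral) (simp add: pairT_def p)
    have ?thesis unfolding z
      by (simp add: coreT_def lastT_def wE01_def wE02_def wE12_def pfirst_def psecond_def p algebra_simps) }
  moreover
  { assume p: "p = 1"
    have z: "(\<Sum>s<S. pairT a b s i p) = 0" by (rule sum.neutral) (simp add: pairT_def p)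
    have ?thesis unfolding z
      by (simp add: coreT_def lastT_def wE01_def wE02_def wE12_def pfirst_def psecond_def p algebra_simps) }
  moreover
  { assume p: "p = 2"
    have z: "(\<Sum>s<S. pairT a b s i p) = 0" by (rule sum.neutral) (simp add: pairT_def p)
    have ?thesis unfolding z
      by (simp add: coreT_def lastT_def wE01_def wE02_def wE12_def pfirst_def psecond_def p algebra_simps) }
  moreover
  { fix s0 assume s0: "s0 < S" and p: "p = 2*s0+3"
    have ne: "\<And>s. 2*s0+3 \<noteq> 2*s+4" by presburger
    have z: "(\<Sum>s<S. pairT a b s i p) = pairT a b s0 i p"
      by (rule sum_single[OF s0]) (simp add: pairT_def p ne)
    have ?thesis unfolding z
      using s0 by (simp add: coreT_def pairT_def lastT_def wE01_def wE02_def wE12_def pfirst_def psecond_def p ne algebra_simps) }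
  moreover
  { fix s0 assume s0: "s0 < S" and p: "p = 2*s0+4"
    have ne: "\<And>s. 2*s0+4 \<noteq> 2*s+3" by presburger
    have z: "(\<Sum>s<S. pairT a b s i p) = pairT a b s0 i p"
      by (rule sum_single[OF s0]) (simp add: pairT_def p ne)
    have ne2: "2*s0+4 \<noteq> 2*S+3" by presburger
    have ?thesis unfolding z
      using s0 by (simp add: coreT_def pairT_def lastT_def wE01_def wE02_def wE12_def pfirst_def psecond_def p ne ne2 algebra_simps) }
  moreover
  { assume e: e and p: "p = 2*S+3"
    have z: "(\<Sum>s<S. pairT a b s i p) = 0" by (rule sum.neutral) (simp add: pairT_def p)
    have ne: "\<And>s. 2*S+3 \<noteq> 2*s+4" by presburger
    have ?thesis unfolding z
      using e by (simp add: coreT_def lastT_def wE01_def wE02_def wE12_def pfirst_def psecond_def p ne algebra_simps) }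
  ultimately show ?thesis by blast
qed




lemma core_full:
  assumes n3: "3 \<le> n" and mS: "m = 2*S + 3 + (if e then 1 else 0)"
  shows "Rep l n m a b (6*l + 3 + S*(3*l+3) + (if e then 2*l+1 else 0))
           (\<lambda>i p. a i 0 * b 0 p + a i 1 * b 1 p + a i 2 * b 2 p)"
proof -
  have m3: "3 \<le> m" using mS by simp
  have C: "Rep l n m a b (l+l+l+l+l+l+1+1+1) (\<lambda>i p. coreT a b e S i p)" by (rule coreT_rep[OF n3 m3])
  have P: "Rep l n m a b (S*(l+l+l+1+1+1)) (\<lambda>i p. \<Sum>s<S. pairT a b s i p)"
    by (rule Rep_sum, rule pairT_rep[OF n3]) (use mS in auto)
  have Lr: "Rep l n m a b (if e then l+l+1 else 0) (\<lambda>i p. if e then lastT a b S i p else 0)"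
  proof (cases e)
    case True
    have "Rep l n m a b (l+l+1) (\<lambda>i p. lastT a b S i p)" by (rule lastT_rep[OF n3]) (use mS True in simp)
    then show ?thesis using True by simp
  next
    case False then show ?thesis using Rep_zero[of l n m a b] by simp
  qed
  have R: "Rep l n m a b ((l+l+l+l+l+l+1+1+1) + S*(l+l+l+1+1+1) + (if e then l+l+1 else 0))
     (\<lambda>i p. coreT a b e S i p + (\<Sum>s<S. pairT a b s i p) + (if e then lastT a b S i p else 0))"
    by (intro Rep_add C P Lr)
  have eq: "(l+l+l+l+l+l+1+1+1) + S*(l+l+l+1+1+1) + (if e then l+l+1 else 0)
        = 6*l + 3 + S*(3*l+3) + (if e then 2*l+1 else 0)" by (simp add: algebra_simps)
  show ?thesis
  proof (rule Rep_cong[OF R[unfolded eq]])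
    fix i p assume "i < l" "p < m"
    then show "coreT a b e S i p + (\<Sum>s<S. pairT a b s i p) + (if e then lastT a b S i p else 0)
       = a i 0 * b 0 p + a i 1 * b 1 p + a i 2 * b 2 p"
      by (intro core_point) (use mS in simp)
  qed
qed

lemma full_rep:
  assumes nR: "n = 2*R + 3" and mS: "m = 2*S + 3 + (if e then 1 else 0)"
  shows "Rep l n m a b ((6*l + 3 + S*(3*l+3) + (if e then 2*l+1 else 0)) + R * (l + l * m + (m - 1)))
           (\<lambda>i p. \<Sum>j<n. a i j * b j p)"
proof -
  have C: "Rep l n m a b (6*l + 3 + S*(3*l+3) + (if e then 2*l+1 else 0))
           (\<lambda>i p. a i 0 * b 0 p + a i 1 * b 1 p + a i 2 * b 2 p)"
    by (rule core_full) (use nR mS in simp_all)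
  have P: "Rep l n m a b (R * (l + l * m + (m - 1)))
      (\<lambda>i p. \<Sum>r<R. a i (2*r+3) * b (2*r+3) p + a i (2*r+4) * b (2*r+4) p)"
    by (rule Rep_sum, rule pair_rep) (use nR mS in auto)
  show ?thesis
  proof (rule Rep_cong[OF Rep_add[OF C P]])
    fix i p assume "i < l" "p < m"
    show "a i 0 * b 0 p + a i 1 * b 1 p + a i 2 * b 2 p +
      (\<Sum>r<R. a i (2*r+3) * b (2*r+3) p + a i (2*r+4) * b (2*r+4) p) = (\<Sum>j<n. a i j * b j p)"
      unfolding nR sum_odd_split[where R=R and f="\<lambda>j. a i j * b j p"] by simp
  qed
qed

lemma Rep_mult_computable:
  "Rep l n m (\<lambda>i j. X (VarA i j)) (\<lambda>j p. X (VarB j p)) k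
      (\<lambda>i p. \<Sum>j<n. X (VarA i j) * X (VarB j p)) \<Longrightarrow> mult_computable l n m k"
  unfolding Rep_def mult_computable_def computes_with_def by blast

theorem mainTheorem6:
  fixes l n m :: nat
  assumes "odd n" and "n \<ge> 3" and "l \<ge> 1" and "m \<ge> 3"
  shows "(odd m \<longrightarrow> mult_computable l n m (n * (l * m + l + m - 1) div 2))
       \<and> (even m \<longrightarrow> mult_computable l n m ((n * (l * m + l + m - 1) + l - 1) div 2))"
proof -
  have "\<exists>R. n = 2*R + 3" using assms(1,2) by presburger
  then obtain R where nR: "n = 2*R + 3" by blast
  show ?thesis
  proof (intro conjI impI)
    assume om: "odd m"
    have "\<exists>S. m = 2*S + 3" using om assms(4) by presburger
    then obtain S where mS: "m = 2*S + 3" by blast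
    have mS': "m = 2*S + 3 + (if False then 1 else 0)" using mS by simp
    have F: "Rep l n m (\<lambda>i j. X (VarA i j)) (\<lambda>j p. X (VarB j p))
       ((6*l + 3 + S*(3*l+3) + (if False then 2*l+1 else 0)) + R * (l + l * m + (m - 1)))
       (\<lambda>i p. \<Sum>j<n. X (VarA i j) * X (VarB j p))"
      by (rule full_rep[OF nR mS'])
    have k: "(6*l + 3 + S*(3*l+3) + (if False then 2*l+1 else 0)) + R * (l + l * m + (m - 1))
        \<le> n * (l * m + l + m - 1) div 2"
    proof -
      have e1: "l * m + l + m - 1 = 2 * (l*S + 2*l + S + 1)" using mS by (simp add: algebra_simps)
      have e3: "m - 1 = 2*S + 2" using mS by simp
      have "(6*l + 3 + S*(3*l+3) + (if False then 2*l+1 else 0)) + R * (l + l * m + (m - 1))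
          = n * (l*S + 2*l + S + 1)" unfolding e3 by (simp add: nR mS algebra_simps)
      moreover have "n * (l * m + l + m - 1) div 2 = n * (l*S + 2*l + S + 1)" unfolding e1 mult.left_commute[of n 2] by (simp only: nonzero_mult_div_cancel_left[of 2] zero_neq_numeral not_False_eq_True)
      ultimately show ?thesis by simp
    qed
    show "mult_computable l n m (n * (l * m + l + m - 1) div 2)"
      by (rule Rep_mult_computable, rule Rep_mono[OF F k])
  next
    assume em: "even m"
    have "\<exists>S. m = 2*S + 4" using em assms(4) by presburger
    then obtain S where mS: "m = 2*S + 4" by blast
    have mS': "m = 2*S + 3 + (if True then 1 else 0)" using mS by simp
    have F: "Rep l n m (\<lambda>i j. X (VarA i j)) (\<lambda>j p. X (VarB j p))
       ((6*l + 3 + S*(3*l+3) + (if True then 2*l+1 else 0)) + R * (l + l * m + (m - 1)))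
       (\<lambda>i p. \<Sum>j<n. X (VarA i j) * X (VarB j p))"
      by (rule full_rep[OF nR mS'])
    have k: "(6*l + 3 + S*(3*l+3) + (if True then 2*l+1 else 0)) + R * (l + l * m + (m - 1))
        \<le> (n * (l * m + l + m - 1) + l - 1) div 2"
    proof -
      obtain l' where l: "l = l' + 1" using assms(3) by (metis le_add_diff_inverse2)
      have e1: "l * m + l + m - 1 = l * m + l + 2*S + 3" using mS by simp
      have e3: "m - 1 = 2*S + 3" using mS by simp
      let ?T = "(6*l + 3 + S*(3*l+3) + (if True then 2*l+1 else 0)) + R * (l + l * m + (m - 1))"
      have "n * (l * m + l + m - 1) + l - 1 = 2 * ?T"
        unfolding e1 e3 by (simp add: nR mS l algebra_simps)
      then show ?thesis by simp
    qed
    show "mult_computable l n m ((n * (l * m + l + m - 1) + l - 1) div 2)"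
      by (rule Rep_mult_computable, rule Rep_mono[OF F k])
  qed
qed


end
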